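(* For any voter matrix $V$, $r_V\ge \frac13$.
   Context: A voter matrix with $t$ topics is a matrix $V\in\{Y,N\}^{n\times t}$ for positive integers $n,t$ (rows are voters), subject to the standing assumption that in every column the number of entries $Y$ is at least the number of entries $N$. A proposal is a vector $p\in\{Y,N\}^t$. A voter $v$ supports $p$ if the Hamming distance between $v$ and $p$ is at most $t/2$; $p$ is supported by $V$ if at least $n/2$ rows of $V$ support $p$. For $i=1,\dots,t$ let $m_i$ be the fraction of entries $Y$ in column $i$ of $V$, and $m_V=\frac1t\sum_i m_i$. For a proposal $p$ let $m_i'=m_i$ if $p_i=Y$ and $m_i'=1-m_i$ if $p_i=N$; set $R_p=\frac1t\sum_i m_i'$ and $r_p=R_p/m_V$. $r_V$ is the maximum of $r_p$ over all proposals $p$ supported by $V$. *)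

theory Defs
  imports Main Complex_Main
begin

text \<open>Entries: True = Y, False = N. A voter matrix is a nonempty list of rows
  (voters, duplicates allowed), each row a list of length t (topics), t > 0.\<close>

definition voter_matrix :: "nat \<Rightarrow> bool list list \<Rightarrow> bool" where
  "voter_matrix t V \<longleftrightarrow> V \<noteq> [] \<and> 0 < t \<and> (\<forall>r\<in>set V. length r = t) \<and>
     (\<forall>i<t. length (filter (\<lambda>r. \<not> r ! i) V) \<le> length (filter (\<lambda>r. r ! i) V))"

definition hamming :: "bool list \<Rightarrow> bool list \<Rightarrow> nat" where
  "hamming v p = card {i. i < length p \<and> v ! i \<noteq> p ! i}"

definition supports :: "nat \<Rightarrow> bool list \<Rightarrow> bool list \<Rightarrow> bool" where
  "supports t v p \<longleftrightarrow> real (hamming v p) \<le> real t / 2"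

definition supported :: "nat \<Rightarrow> bool list list \<Rightarrow> bool list \<Rightarrow> bool" where
  "supported t V p \<longleftrightarrow> real (length (filter (\<lambda>v. supports t v p) V)) \<ge> real (length V) / 2"

definition mfrac :: "bool list list \<Rightarrow> nat \<Rightarrow> real" where
  "mfrac V i = real (length (filter (\<lambda>r. r ! i) V)) / real (length V)"

definition mV :: "nat \<Rightarrow> bool list list \<Rightarrow> real" where
  "mV t V = (\<Sum>i<t. mfrac V i) / real t"

definition Rp :: "nat \<Rightarrow> bool list list \<Rightarrow> bool list \<Rightarrow> real" where
  "Rp t V p = (\<Sum>i<t. if p ! i then mfrac V i else 1 - mfrac V i) / real t"

definition rp :: "nat \<Rightarrow> bool list list \<Rightarrow> bool list \<Rightarrow> real" where
  "rp t V p = Rp t V p / mV t V"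

definition rV :: "nat \<Rightarrow> bool list list \<Rightarrow> real" where
  "rV t V = Max {rp t V p | p. length p = t \<and> supported t V p}"

end

theory Submission
  imports Defs
begin

lemma filter_or_count:
  assumes "\<And>v. v \<in> set V \<Longrightarrow> P v \<or> Q v"
  shows "length V \<le> length (filter P V) + length (filter Q V)"
  using assms by (induction V) auto

lemma filter_mono_count:
  assumes "\<And>v. v \<in> set V \<Longrightarrow> P v \<Longrightarrow> Q v"
  shows "length (filter P V) \<le> length (filter Q V)"
  using assms by (induction V) auto

lemma card_split_lt:
  "card {i. i < t \<and> P i} + card {i. i < t \<and> \<not> P i} = t"
proof -
  have "card ({i. i < t \<and> P i} \<union> {i. i < t \<and> \<not> P i}) = card {i. i < t \<and> P i} + card {i. i < t \<and> \<not> P i}"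
    by (rule card_Un_disjoint) auto
  moreover have "{i. i < t \<and> P i} \<union> {i. i < t \<and> \<not> P i} = {..<t}" by auto
  ultimately show ?thesis by simp
qed

lemma hamming_compl:
  assumes "length p = t"
  shows "hamming v p + hamming v (map Not p) = t"
proof -
  have "{i. i < length (map Not p) \<and> v ! i \<noteq> map Not p ! i} = {i. i < t \<and> \<not> (v ! i \<noteq> p ! i)}"
    using assms by auto
  then show ?thesis unfolding hamming_def using assms card_split_lt[of t "\<lambda>i. v ! i \<noteq> p ! i"]
    by simp
qed

lemma supported_or:
  assumes "length p = t"
  shows "supported t V p \<or> supported t V (map Not p)"
proof -
  have "supports t v p \<or> supports t v (map Not p)" for v
  proof -
    have "real (hamming v p) + real (hamming v (map Not p)) = real t"
      using hamming_compl[OF assms, of v] by (metis of_nat_add)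
    then show ?thesis unfolding supports_def by linarith
  qed
  then have "length V \<le> length (filter (\<lambda>v. supports t v p) V) + length (filter (\<lambda>v. supports t v (map Not p)) V)"
    by (intro filter_or_count) auto
  then show ?thesis unfolding supported_def by linarith
qed

lemma mfrac_ge:
  assumes "voter_matrix t V" "i < t"
  shows "mfrac V i \<ge> 1/2" "mfrac V i \<le> 1"
proof -
  have ne: "length V > 0" using assms unfolding voter_matrix_def by auto
  have c: "length (filter (\<lambda>r. \<not> r ! i) V) \<le> length (filter (\<lambda>r. r ! i) V)"
    using assms unfolding voter_matrix_def by auto
  have s: "length (filter (\<lambda>r. r ! i) V) + length (filter (\<lambda>r. \<not> r ! i) V) = length V"
    by (rule sum_length_filter_compl)
  have "real (length V) \<le> 2 * real (length (filter (\<lambda>r. r ! i) V))" using c s by linarith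
  then show "mfrac V i \<ge> 1/2" unfolding mfrac_def using ne by (simp add: field_simps)
  have "length (filter (\<lambda>r. r ! i) V) \<le> length V" by simp
  then show "mfrac V i \<le> 1" unfolding mfrac_def using ne by (simp add: field_simps)
qed

lemma main_exists:
  assumes "voter_matrix t V"
  shows "\<exists>p. length p = t \<and> supported t V p \<and> rp t V p \<ge> 1/3"
proof -
  define s where "s = mfrac V"
  define M where "M = (\<Sum>i<t. s i)"
  have tpos: "t > 0" using assms unfolding voter_matrix_def by auto
  have s1: "\<And>i. i < t \<Longrightarrow> s i \<ge> 1/2" and s2: "\<And>i. i < t \<Longrightarrow> s i \<le> 1"
    using mfrac_ge[OF assms] unfolding s_def by auto
  have Mlo: "M \<ge> real t / 2"
  proof -
    have "(\<Sum>i<t. (1/2::real)) \<le> M" unfolding M_def by (rule sum_mono) (use s1 in auto)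
    then show ?thesis by simp
  qed
  have Mhi: "M \<le> real t"
  proof -
    have "M \<le> (\<Sum>i<t. (1::real))" unfolding M_def by (rule sum_mono) (use s2 in auto)
    then show ?thesis by simp
  qed
  have mVpos: "mV t V > 0" unfolding mV_def using Mlo tpos unfolding M_def s_def by simp
  define A where "A p = (\<Sum>i<t. if p ! i then s i else 1 - s i)" for p :: "bool list"
  have rp_eq: "rp t V p = A p / M" for p
    unfolding rp_def Rp_def mV_def A_def M_def s_def using tpos by simp
  have Mpos: "M > 0" using Mlo tpos by simp
  have key: "rp t V p \<ge> 1/3" if "A p \<ge> M / 3" for p
    using that Mpos unfolding rp_eq by (simp add: field_simps)
  have Acompl: "A (map Not p) = real t - A p" if "length p = t" for p
  proof -
    have "A (map Not p) = (\<Sum>i<t. 1 - (if p ! i then s i else 1 - s i))"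
      unfolding A_def using that by (intro sum.cong) auto
    also have "\<dots> = real t - A p" unfolding A_def by (simp add: sum_subtractf)
    finally show ?thesis .
  qed
  have goal_from: "\<exists>p. length p = t \<and> supported t V p \<and> rp t V p \<ge> 1/3"
    if "length q = t" "A q \<ge> M/3" "real t - A q \<ge> M/3" for q
  proof (cases "supported t V q")
    case True then show ?thesis using that key by blast
  next
    case False
    then have "supported t V (map Not q)" using supported_or[OF that(1)] by blast
    moreover have "rp t V (map Not q) \<ge> 1/3" using key Acompl[OF that(1)] that by simp
    ultimately show ?thesis using that(1) by (intro exI[of _ "map Not q"]) auto
  qed
  show ?thesis
  proof (cases "t \<le> 2")
    case True
    define p where "p = replicate t True"
    have Ap: "A p = M" unfolding A_def M_def p_def by (intro sum.cong) auto
    have sup: "supported t V p"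
    proof -
      have "supports t v p" if "v \<in> set V" "v ! 0" for v
      proof -
        have "{i. i < length p \<and> v ! i \<noteq> p ! i} \<subseteq> {1..<t}"
        proof
          fix x assume x: "x \<in> {i. i < length p \<and> v ! i \<noteq> p ! i}"
          then have "x \<noteq> 0" using that(2) unfolding p_def by auto
          then show "x \<in> {1..<t}" using x unfolding p_def by auto
        qed
        then have "hamming v p \<le> t - 1" unfolding hamming_def
          by (metis card_atLeastLessThan card_mono finite_atLeastLessThan)
        then show ?thesis unfolding supports_def using True tpos by linarith
      qed
      then have le: "length (filter (\<lambda>r. r ! 0) V) \<le> length (filter (\<lambda>v. supports t v p) V)"
        by (intro filter_mono_count) auto
      have "s 0 \<ge> 1/2" using s1 tpos by simp
      moreover have ne: "length V > 0" using assms unfolding voter_matrix_def by auto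
      ultimately have "real (length V) / 2 \<le> real (length (filter (\<lambda>r. r ! 0) V))"
        unfolding s_def mfrac_def by (simp add: field_simps)
      then show ?thesis unfolding supported_def using le by linarith
    qed
    have "rp t V p \<ge> 1/3" using key Ap Mpos by simp
    moreover have "length p = t" unfolding p_def by simp
    ultimately show ?thesis using sup by blast
  next
    case False
    define g where "g k = (\<Sum>i<k. 2 * s i - 1)" for k
    define a where "a = 4 * M / 3 - real t"
    define b where "b = 2 * M / 3"
    have ab: "a + 1 \<le> b" unfolding a_def b_def using False Mhi by simp
    have step: "g (Suc k) \<le> g k + 1" if "k < t" for k
      unfolding g_def using s2[OF that] by simp
    have ivt: "n \<le> t \<Longrightarrow> g n \<ge> a \<Longrightarrow> \<exists>k\<le>n. a \<le> g k \<and> g k \<le> b" for n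
    proof (induction n)
      case 0
      then show ?case unfolding g_def b_def using Mpos by auto
    next
      case (Suc n)
      show ?case
      proof (cases "g n \<ge> a")
        case True then show ?thesis using Suc by (meson Suc_leD le_SucI)
      next
        case False
        then have "g (Suc n) \<le> b" using step[of n] Suc.prems ab by linarith
        then show ?thesis using Suc.prems by blast
      qed
    qed
    have gt: "g t = 2 * M - real t"
      unfolding g_def M_def by (simp add: sum_subtractf sum_distrib_left)
    have "g t \<ge> a" unfolding gt a_def using Mpos by simp
    then obtain k where k: "k \<le> t" "a \<le> g k" "g k \<le> b" using ivt[of t] by auto
    define q where "q = map (\<lambda>i. k \<le> i) [0..<t]"
    have lq: "length q = t" unfolding q_def by simp
    have Aq: "A q = M - g k"
    proof -
      have "A q = (\<Sum>i<t. s i - (if i \<in> {..<k} then 2 * s i - 1 else 0))"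
        unfolding A_def q_def by (intro sum.cong) auto
      also have "\<dots> = M - (\<Sum>i<t. if i \<in> {..<k} then 2 * s i - 1 else 0)"
        unfolding M_def by (rule sum_subtractf)
      also have "(\<Sum>i<t. if i \<in> {..<k} then 2 * s i - 1 else 0) = (\<Sum>i\<in>{..<t} \<inter> {..<k}. 2 * s i - 1)"
        by (rule sum.inter_restrict[symmetric]) simp
      also have "{..<t} \<inter> {..<k} = {..<k}" using k(1) by auto
      finally show ?thesis unfolding g_def by simp
    qed
    show ?thesis
      by (rule goal_from[OF lq]) (use Aq k a_def b_def in auto)
  qed
qed

theorem lemma5p1:
  assumes "voter_matrix t V"
  shows "rV t V \<ge> 1 / 3"
proof -
  obtain p where p: "length p = t" "supported t V p" "rp t V p \<ge> 1/3"
    using main_exists[OF assms] by blast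
  have fin: "finite {rp t V p | p. length p = t \<and> supported t V p}"
  proof -
    have "{rp t V p | p. length p = t \<and> supported t V p} \<subseteq> rp t V ` {xs. set xs \<subseteq> UNIV \<and> length xs = t}"
      by auto
    moreover have "finite {xs :: bool list. set xs \<subseteq> UNIV \<and> length xs = t}"
      by (rule finite_lists_length_eq) simp
    ultimately show ?thesis using finite_subset by blast
  qed
  have "rp t V p \<le> rV t V" unfolding rV_def
    by (rule Max_ge[OF fin]) (use p in auto)
  then show ?thesis using p by linarith
qed

end
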